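(* Let $\mathcal A$ be an ordered normed algebra with unit $e$ whose algebra cone $\mathcal A^+$ is normal with normality constant $\alpha$. Let $a,b\in\mathcal A$ with at least one of them positive. Then for every $\delta$ with $0<\delta<\frac{1}{\alpha}e^{-2\alpha\|a\|\,\|b\|}$ there is no $x\in\mathcal A$ with $\|x\|<\delta$ and $ab-ba\geq e+x$.
   Context: A normed algebra $\mathcal A$ (real or complex, with submultiplicative norm) with unit $e$. A cone is a nonempty subset $\mathcal A^+\subseteq\mathcal A$ with $\mathcal A^++\mathcal A^+\subseteq\mathcal A^+$, $\lambda\mathcal A^+\subseteq\mathcal A^+$ for all $\lambda\geq 0$, and $\mathcal A^+\cap(-\mathcal A^+)=\{0\}$; it induces the partial order $a\leq b \iff b-a\in\mathcal A^+$. Elements of $\mathcal A^+$ are called positive. The cone is an algebra cone if $\mathcal A^+\cdot\mathcal A^+\subseteq\mathcal A^+$ and $e\in\mathcal A^+$; then $\mathcal A$ is called an ordered normed algebra. The cone is normal with normality constant $\alpha$ (necessarily $\alpha\geq1$) if $0\leq x\leq y$ implies $\|x\|\leq\alpha\|y\|$. In the bound, $e^{(\cdot)}$ denotes the real exponential function. *)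

theory Defs
  imports "HOL-Analysis.Analysis"
begin

text \<open>A unital normed algebra (real, or complex viewed as real; submultiplicative norm)
  is modelled by the type class combination real_normed_algebra + ring_1, whose
  unit is 1 (with 1 \<noteq> 0; the norm of 1 is NOT required to be 1).\<close>

definition cone :: "'a::real_vector set \<Rightarrow> bool" where
  "cone C \<longleftrightarrow> C \<noteq> {} \<and> (\<forall>x\<in>C. \<forall>y\<in>C. x + y \<in> C)
     \<and> (\<forall>x\<in>C. \<forall>c::real. c \<ge> 0 \<longrightarrow> c *\<^sub>R x \<in> C)
     \<and> C \<inter> uminus ` C = {0}"

definition cone_le :: "'a::real_vector set \<Rightarrow> 'a \<Rightarrow> 'a \<Rightarrow> bool" where
  "cone_le C x y \<longleftrightarrow> y - x \<in> C"

definition algebra_cone :: "'a::{real_normed_algebra, ring_1} set \<Rightarrow> bool" where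
  "algebra_cone C \<longleftrightarrow> cone C \<and> (\<forall>x\<in>C. \<forall>y\<in>C. x * y \<in> C) \<and> 1 \<in> C"

definition normal_cone :: "'a::real_normed_vector set \<Rightarrow> real \<Rightarrow> bool" where
  "normal_cone C \<alpha> \<longleftrightarrow>
     (\<forall>x y. cone_le C 0 x \<and> cone_le C x y \<longrightarrow> norm x \<le> \<alpha> * norm y)"

end

theory Submission
  imports Defs
begin

primrec Yf :: "'a::{real_normed_algebra, ring_1} \<Rightarrow> 'a \<Rightarrow> nat \<Rightarrow> 'a" where
  "Yf a x 0 = 0"
| "Yf a x (Suc n) = Yf a x n * a + a^n * x"

primrec Tf :: "'a::{real_normed_algebra, ring_1} \<Rightarrow> nat \<Rightarrow> 'a" where
  "Tf a 0 = 0"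
| "Tf a (Suc k) = real (Suc k) *\<^sub>R a^k"

lemma Tf_step: "Tf a n * a + a^n = Tf a (Suc n)"
proof (cases n)
  case 0 then show ?thesis by simp
next
  case (Suc k)
  have e: "real (Suc k) *\<^sub>R a ^ k * a = real (Suc k) *\<^sub>R a ^ Suc k"
    by (simp only: mult_scaleR_left power_Suc2)
  have "real (Suc k) *\<^sub>R a ^ k * a + a ^ Suc k = (real (Suc k) + 1) *\<^sub>R a ^ Suc k"
    unfolding e scaleR_add_left by simp
  then show ?thesis using Suc by simp
qed

lemma decomp:
  fixes a b x D :: "'a::{real_normed_algebra, ring_1}"
  assumes "a * b - b * a = 1 + x + D"
  shows "a^n * b - b * a^n = Tf a n + Yf a x n + Yf a D n"
proof (induction n)
  case 0 then show ?case by simp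
next
  case (Suc n)
  have "a^Suc n * b - b * a^Suc n = (a^n * b - b * a^n) * a + a^n * (a * b - b * a)"
    by (simp add: algebra_simps power_Suc2 mult.assoc)
       (simp add: power_Suc power_commutes mult.assoc[symmetric])
  also have "\<dots> = (Tf a n * a + a^n) + (Yf a x n * a + a^n * x) + (Yf a D n * a + a^n * D)"
    by (simp add: Suc assms algebra_simps)
  also have "\<dots> = Tf a (Suc n) + Yf a x (Suc n) + Yf a D (Suc n)"
    by (simp add: Tf_step)
  finally show ?case .
qed

lemma norm_pow_left:
  fixes a z :: "'a::{real_normed_algebra, ring_1}"
  shows "norm (a^n * z) \<le> norm a ^ n * norm z"
proof (induction n)
  case 0 then show ?case by simp
next
  case (Suc n)
  have "norm (a^Suc n * z) = norm (a * (a^n * z))" by (simp add: mult.assoc)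
  also have "\<dots> \<le> norm a * norm (a^n * z)" by (rule norm_mult_ineq)
  also have "\<dots> \<le> norm a * (norm a ^ n * norm z)" by (simp add: Suc mult_left_mono)
  finally show ?case by (simp add: mult.assoc)
qed

lemma norm_pow:
  fixes a :: "'a::{real_normed_algebra, ring_1}"
  shows "norm (a^Suc n) \<le> norm a ^ Suc n"
proof -
  have "norm (a^Suc n) = norm (a^n * a)" by (simp only: power_Suc2)
  also have "\<dots> \<le> norm a ^ n * norm a" by (rule norm_pow_left)
  finally show ?thesis by (simp add: power_Suc2 mult.commute)
qed

lemma norm_Yf:
  fixes a x :: "'a::{real_normed_algebra, ring_1}"
  shows "norm (Yf a x (Suc k)) \<le> real (Suc k) * norm a ^ k * norm x"
proof (induction k)
  case 0 then show ?case by simp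
next
  case (Suc k)
  have "norm (Yf a x (Suc (Suc k))) \<le> norm (Yf a x (Suc k) * a) + norm (a^Suc k * x)"
    by (simp add: norm_triangle_ineq)
  also have "\<dots> \<le> norm (Yf a x (Suc k)) * norm a + norm a ^ Suc k * norm x"
    by (intro add_mono norm_mult_ineq norm_pow_left)
  also have "\<dots> \<le> real (Suc k) * norm a ^ k * norm x * norm a + norm a ^ Suc k * norm x"
    by (intro add_mono mult_right_mono Suc) auto
  also have "\<dots> = real (Suc (Suc k)) * norm a ^ Suc k * norm x"
    by (simp add: algebra_simps)
  finally show ?case .
qed

lemma cone_facts:
  assumes "algebra_cone C"
  shows "0 \<in> C" "1 \<in> C" "\<And>x y. x \<in> C \<Longrightarrow> y \<in> C \<Longrightarrow> x + y \<in> C"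
    "\<And>x y. x \<in> C \<Longrightarrow> y \<in> C \<Longrightarrow> x * y \<in> C"
    "\<And>x c. x \<in> C \<Longrightarrow> 0 \<le> c \<Longrightarrow> c *\<^sub>R x \<in> C"
  using assms unfolding algebra_cone_def cone_def by blast+

lemma pow_in:
  assumes "algebra_cone C" "a \<in> C"
  shows "a^n \<in> C"
  by (induction n) (use assms cone_facts[OF assms(1)] in auto)

lemma Yf_in:
  assumes "algebra_cone C" "a \<in> C" "D \<in> C"
  shows "Yf a D n \<in> C"
proof (induction n)
  case 0 then show ?case using cone_facts[OF assms(1)] by simp
next
  case (Suc n)
  have "Yf a D n * a \<in> C" by (rule cone_facts(4)[OF assms(1) Suc assms(2)])
  moreover have "a^n * D \<in> C" by (rule cone_facts(4)[OF assms(1) pow_in[OF assms(1,2)] assms(3)])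
  ultimately show ?case using cone_facts(3)[OF assms(1)] by simp
qed

lemma step_ineq:
  fixes a b x :: "'a::{real_normed_algebra, ring_1}"
  assumes ac: "algebra_cone C" and nc: "normal_cone C \<alpha>" and aC: "a \<in> C"
    and le: "cone_le C (1 + x) (a * b - b * a)" and \<alpha>0: "0 \<le> \<alpha>"
  shows "norm (a^k) \<le> (2 * \<alpha> * norm b / real (Suc k)) * norm (a^Suc k)
           + \<alpha> * norm x * norm a ^ k"
proof -
  define D where "D = a * b - b * a - (1 + x)"
  have DC: "D \<in> C" using le unfolding D_def cone_le_def .
  have "a * b - b * a = 1 + x + D" unfolding D_def by simp
  note dec = decomp[OF this, of "Suc k"]
  define c where "c = a^Suc k * b - b * a^Suc k"
  have T0: "cone_le C 0 (Tf a (Suc k))"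
    unfolding cone_le_def using cone_facts(5)[OF ac pow_in[OF ac aC, of k]] by simp
  have T1: "cone_le C (Tf a (Suc k)) (c - Yf a x (Suc k))"
  proof -
    have "c - Yf a x (Suc k) - Tf a (Suc k) = Yf a D (Suc k)"
      unfolding c_def dec by (simp del: Yf.simps Tf.simps)
    then show ?thesis unfolding cone_le_def using Yf_in[OF ac aC DC, of "Suc k"] by simp
  qed
  have N1: "norm (Tf a (Suc k)) \<le> \<alpha> * norm (c - Yf a x (Suc k))"
    using nc T0 T1 unfolding normal_cone_def by blast
  have "norm (c - Yf a x (Suc k)) \<le> 2 * norm b * norm (a^Suc k) + real (Suc k) * norm a ^ k * norm x"
  proof -
    have "norm (c - Yf a x (Suc k)) \<le> norm (a^Suc k * b) + norm (b * a^Suc k) + norm (Yf a x (Suc k))"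
      unfolding c_def using norm_triangle_ineq4[of "a^Suc k * b - b * a^Suc k" "Yf a x (Suc k)"]
        norm_triangle_ineq4[of "a^Suc k * b" "b * a^Suc k"] by linarith
    also have "\<dots> \<le> norm (a^Suc k) * norm b + norm b * norm (a^Suc k) + real (Suc k) * norm a ^ k * norm x"
      by (intro add_mono norm_mult_ineq norm_Yf)
    finally show ?thesis by (simp add: algebra_simps)
  qed
  hence "\<alpha> * norm (c - Yf a x (Suc k)) \<le> \<alpha> * (2 * norm b * norm (a^Suc k) + real (Suc k) * norm a ^ k * norm x)"
    using \<alpha>0 by (rule mult_left_mono)
  with N1 have "real (Suc k) * norm (a^k) \<le> \<alpha> * (2 * norm b * norm (a^Suc k) + real (Suc k) * norm a ^ k * norm x)"
    by (simp add: abs_of_nonneg)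
  hence "norm (a^k) \<le> \<alpha> * (2 * norm b * norm (a^Suc k) + real (Suc k) * norm a ^ k * norm x) / real (Suc k)"
    by (simp add: field_simps del: of_nat_Suc)
  thus ?thesis by (simp add: field_simps del: of_nat_Suc)
qed

lemma alpha_ge1:
  fixes C :: "'a::{real_normed_algebra, ring_1} set"
  assumes ac: "algebra_cone C" and nc: "normal_cone C \<alpha>"
  shows "1 \<le> \<alpha>"
proof -
  have "cone_le C 0 (1::'a)" "cone_le C (1::'a) 1"
    unfolding cone_le_def using cone_facts[OF ac] by auto
  hence "norm (1::'a) \<le> \<alpha> * norm (1::'a)" using nc unfolding normal_cone_def by blast
  moreover have "norm (1::'a) > 0" by simp
  ultimately show ?thesis by simp
qed

lemma norm_one_ge:
  shows "1 \<le> norm (1::'a::{real_normed_algebra, ring_1})"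
proof -
  have "norm (1::'a) = norm ((1::'a) * 1)" by simp
  also have "\<dots> \<le> norm (1::'a) * norm (1::'a)" by (rule norm_mult_ineq)
  finally have "norm (1::'a) * 1 \<le> norm (1::'a) * norm (1::'a)" by simp
  moreover have "norm (1::'a) > 0" by simp
  ultimately show ?thesis by (simp only: mult_le_cancel_left_pos)
qed

lemma main:
  fixes a b x :: "'a::{real_normed_algebra, ring_1}"
  assumes ac: "algebra_cone C" and nc: "normal_cone C \<alpha>" and aC: "a \<in> C"
    and le: "cone_le C (1 + x) (a * b - b * a)"
  shows "1 \<le> \<alpha> * norm x * exp (2 * \<alpha> * norm a * norm b)"
proof (rule ccontr)
  assume H: "\<not> ?thesis"
  have \<alpha>1: "1 \<le> \<alpha>" by (rule alpha_ge1[OF ac nc])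
  define \<beta> where "\<beta> = 2 * \<alpha> * norm b"
  define r where "r = norm a"
  define \<epsilon> where "\<epsilon> = \<alpha> * norm x"
  define s where "s k = norm (a^k)" for k
  have \<beta>0: "0 \<le> \<beta>" unfolding \<beta>_def using \<alpha>1 by simp
  have r0: "0 \<le> r" unfolding r_def by simp
  have \<epsilon>0: "0 \<le> \<epsilon>" unfolding \<epsilon>_def using \<alpha>1 by simp
  have step: "s k \<le> \<beta> / real (Suc k) * s (Suc k) + \<epsilon> * r ^ k" for k
    using step_ineq[OF ac nc aC le, of k] \<alpha>1 unfolding s_def \<beta>_def \<epsilon>_def r_def by simp
  have iter: "s 0 \<le> \<beta>^N / fact N * s N + \<epsilon> * (\<Sum>k<N. (\<beta>*r)^k / fact k)" for N
  proof (induction N)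
    case 0 then show ?case by simp
  next
    case (Suc N)
    have c: "0 \<le> \<beta>^N / fact N" using \<beta>0 by simp
    have "\<beta>^N / fact N * s N \<le> \<beta>^N / fact N * (\<beta> / real (Suc N) * s (Suc N) + \<epsilon> * r ^ N)"
      by (rule mult_left_mono[OF step c])
    also have "\<dots> = \<beta>^Suc N / fact (Suc N) * s (Suc N) + \<epsilon> * ((\<beta>*r)^N / fact N)"
      by (simp add: field_simps power_mult_distrib del: of_nat_Suc)
    finally have X: "\<beta>^N / fact N * s N \<le> \<beta>^Suc N / fact (Suc N) * s (Suc N) + \<epsilon> * ((\<beta>*r)^N / fact N)" .
    show ?case using Suc.IH X by (simp only: sum.lessThan_Suc distrib_left)
  qed
  define z where "z = \<beta> * r"
  have z0: "0 \<le> z" unfolding z_def using \<beta>0 r0 by simp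
  have sums: "(\<lambda>n. z^n /\<^sub>R fact n) sums exp z" by (rule exp_converges)
  have sumle: "(\<Sum>k<N. z^k / fact k) \<le> exp z" for N
  proof -
    have "(\<Sum>k<N. z^k /\<^sub>R fact k) \<le> suminf (\<lambda>n. z^n /\<^sub>R fact n)"
      by (rule sum_le_suminf[OF sums_summable[OF sums]]) (use z0 in auto)
    thus ?thesis using sums_unique[OF sums] by (simp add: divide_inverse mult.commute)
  qed
  have eK: "exp z = exp (2 * \<alpha> * norm a * norm b)" unfolding z_def \<beta>_def r_def
    by (simp add: mult_ac)
  define \<eta> where "\<eta> = 1 - \<epsilon> * exp z"
  have \<eta>0: "0 < \<eta>" unfolding \<eta>_def \<epsilon>_def using H eK by simp
  have lim: "(\<lambda>n. z^n /\<^sub>R fact n) \<longlonglongrightarrow> 0"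
    by (rule summable_LIMSEQ_zero[OF sums_summable[OF sums]])
  then obtain N0 where N0: "\<And>n. n \<ge> N0 \<Longrightarrow> norm (z^n /\<^sub>R fact n) < \<eta>"
    using \<eta>0 unfolding LIMSEQ_def dist_real_def by (metis diff_zero real_norm_def)
  define N where "N = Suc N0"
  have tN: "z^N / fact N < \<eta>"
    using N0[of N] z0 unfolding N_def by (simp add: divide_inverse mult.commute)
  have sN: "s N \<le> r ^ N" unfolding s_def r_def N_def by (rule norm_pow)
  have "1 \<le> s 0" unfolding s_def using norm_one_ge by simp
  also have "s 0 \<le> \<beta>^N / fact N * s N + \<epsilon> * (\<Sum>k<N. z^k / fact k)"
    using iter[of N] unfolding z_def .
  also have "\<dots> \<le> \<beta>^N / fact N * r^N + \<epsilon> * exp z"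
    by (intro add_mono mult_left_mono sN sumle \<epsilon>0) (use \<beta>0 in simp)
  also have "\<beta>^N / fact N * r^N = z^N / fact N" unfolding z_def by (simp add: power_mult_distrib)
  finally have "1 < \<eta> + \<epsilon> * exp z" using tN by linarith
  thus False unfolding \<eta>_def by simp
qed

theorem corollary2p5:
  fixes C :: "'a::{real_normed_algebra, ring_1} set"
    and \<alpha> \<delta> :: real and a b :: 'a
  assumes "algebra_cone C"
    and "normal_cone C \<alpha>"
    and "a \<in> C \<or> b \<in> C"
    and "0 < \<delta>"
    and "\<delta> < (1 / \<alpha>) * exp (- 2 * \<alpha> * norm a * norm b)"
  shows "\<not> (\<exists>x. norm x < \<delta> \<and> cone_le C (1 + x) (a * b - b * a))"
proof
  assume "\<exists>x. norm x < \<delta> \<and> cone_le C (1 + x) (a * b - b * a)"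
  then obtain x where nx: "norm x < \<delta>" and le: "cone_le C (1 + x) (a * b - b * a)" by blast
  have \<alpha>1: "1 \<le> \<alpha>" by (rule alpha_ge1[OF assms(1,2)])
  define K where "K = 2 * \<alpha> * norm a * norm b"
  have one: "1 \<le> \<alpha> * norm x * exp K"
    using assms(3)
  proof
    assume "a \<in> C" thus ?thesis using main[OF assms(1,2) _ le] unfolding K_def by simp
  next
    assume bC: "b \<in> C"
    have "b * (- a) - (- a) * b = a * b - b * a" by simp
    hence le': "cone_le C (1 + x) (b * (- a) - (- a) * b)" using le by simp
    show ?thesis using main[OF assms(1,2) bC le'] unfolding K_def by (simp add: mult_ac)
  qed
  have "\<alpha> * norm x < \<alpha> * \<delta>" using nx \<alpha>1 by simp
  also have "\<alpha> * \<delta> < exp (- K)"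
    using assms(5) \<alpha>1 unfolding K_def by (simp add: field_simps)
  finally have "\<alpha> * norm x * exp K < exp (- K) * exp K" by simp
  also have "exp (- K) * exp K = 1" by (metis exp_minus_inverse mult.commute)
  finally show False using one by simp
qed

end
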